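(* Let $U$ be an open subset of hyperbolic $3$-space $H^3$ on which the geodesic polar coordinates $(r,\theta,\phi)$, $r>0$, $\theta\in(0,\pi)$, are valid, so that $g_{H^3}=\mathrm{d}r^2+\sinh^2 r\,(\mathrm{d}\theta^2+\sin^2\theta\,\mathrm{d}\phi^2)$, and let $\Lambda:U\to(0,\infty)$ be a smooth function satisfying the Helmholtz equation $$\sinh^2 r\left(\partial_r^2\Lambda+2\coth r\,\partial_r\Lambda+\Lambda\right)+\partial_\theta^2\Lambda+\cot\theta\,\partial_\theta\Lambda+\frac{1}{\sin^2\theta}\partial_\phi^2\Lambda=0,$$ i.e. $\triangle_{H^3}\Lambda+\Lambda=0$. Define the $\mathfrak{su}(2)$-valued function $\Phi$ and $1$-form $\mathcal{A}$ on $U$ by $$\Phi=\frac{1}{2\Lambda}\left(\partial_r\Lambda\,\mathbf{i}+\frac{\partial_\theta\Lambda}{\sinh r}\,\mathbf{j}+\frac{\partial_\phi\Lambda}{\sinh r\sin\theta}\,\mathbf{k}\right),$$ $$\mathcal{A}=\frac{\mathbf{i}}{2}\left[\left(\cos\theta+\sin\theta\,\frac{\partial_\theta\Lambda}{\Lambda}\right)\mathrm{d}\phi-\frac{\partial_\phi\Lambda}{\Lambda\sin\theta}\,\mathrm{d}\theta\right]-\frac{\mathbf{j}}{2}\left[\left(\cosh r+\sinh r\,\frac{\partial_r\Lambda}{\Lambda}\right)\sin\theta\,\mathrm{d}\phi-\frac{\partial_\phi\Lambda}{\Lambda\sinh r\sin\theta}\,\mathrm{d}r\right]+\frac{\mathbf{k}}{2}\left[\left(\cosh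 r+\sinh r\,\frac{\partial_r\Lambda}{\Lambda}\right)\mathrm{d}\theta-\frac{\partial_\theta\Lambda}{\Lambda\sinh r}\,\mathrm{d}r\right].$$ Then $(\Phi,\mathcal{A})$ satisfies the Bogomolny equations $\mathrm{d}_{\mathcal{A}}\Phi=-\ast_{H^3}\mathcal{F}$ on $U$, where $\mathcal{F}$ is the curvature of $\mathcal{A}$.
   Context: $\mathfrak{su}(2)$ is identified with the imaginary quaternions, spanned by the unit quaternions $\mathbf{i},\mathbf{j},\mathbf{k}$ (with $\mathbf{i}\mathbf{j}=\mathbf{k}$ etc.). For an $\mathfrak{su}(2)$-valued $1$-form $\mathcal{A}$ and function $\Phi$: $\mathrm{d}_{\mathcal{A}}\Phi=\mathrm{d}\Phi+[\mathcal{A},\Phi]$ with $[X,Y]=XY-YX$ (quaternion product), and $\mathcal{F}=\mathrm{d}\mathcal{A}+\mathcal{A}\wedge\mathcal{A}$. $\ast_{H^3}$ is the Hodge star of $g_{H^3}$ with orientation given by the volume form $\sinh^2 r\sin\theta\,\mathrm{d}r\wedge\mathrm{d}\theta\wedge\mathrm{d}\phi$. *)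

theory Defs
  imports "HOL-Analysis.Analysis"
begin

text \<open>Coordinates: a point p :: real^3 has p$1 = r, p$2 = theta, p$3 = phi.\<close>

definition pd :: "3 \<Rightarrow> (real^3 \<Rightarrow> 'a::real_normed_vector) \<Rightarrow> real^3 \<Rightarrow> 'a" where
  "pd i f p = frechet_derivative f (at p) (axis i 1)"

fun iter_pd :: "3 list \<Rightarrow> (real^3 \<Rightarrow> real) \<Rightarrow> real^3 \<Rightarrow> real" where
  "iter_pd [] f = f"
| "iter_pd (i # is) f = pd i (iter_pd is f)"

definition smooth_on :: "(real^3) set \<Rightarrow> (real^3 \<Rightarrow> real) \<Rightarrow> bool" where
  "smooth_on U f \<longleftrightarrow> (\<forall>is. iter_pd is f differentiable_on U)"

datatype quat = Quat real real real real

fun qmult :: "quat \<Rightarrow> quat \<Rightarrow> quat" where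
  "qmult (Quat a1 b1 c1 d1) (Quat a2 b2 c2 d2) =
     Quat (a1*a2 - b1*b2 - c1*c2 - d1*d2)
          (a1*b2 + b1*a2 + c1*d2 - d1*c2)
          (a1*c2 - b1*d2 + c1*a2 + d1*b2)
          (a1*d2 + b1*c2 - c1*b2 + d1*a2)"

fun qsub :: "quat \<Rightarrow> quat \<Rightarrow> quat" where
  "qsub (Quat a1 b1 c1 d1) (Quat a2 b2 c2 d2) = Quat (a1-a2) (b1-b2) (c1-c2) (d1-d2)"

text \<open>su(2) = imaginary quaternions, encoded by coefficient vectors (x1,x2,x3) = x1 i + x2 j + x3 k.\<close>
definition to_quat :: "real^3 \<Rightarrow> quat" where
  "to_quat x = Quat 0 (x$1) (x$2) (x$3)"

fun quat_im :: "quat \<Rightarrow> real^3" where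
  "quat_im (Quat a b c d) = vector [b, c, d]"

text \<open>Commutator [X,Y] = XY - YX (quaternion product); it is again imaginary.\<close>
definition su2_bracket :: "real^3 \<Rightarrow> real^3 \<Rightarrow> real^3" where
  "su2_bracket X Y = quat_im (qsub (qmult (to_quat X) (to_quat Y)) (qmult (to_quat Y) (to_quat X)))"

definition gH3 :: "3 \<Rightarrow> real^3 \<Rightarrow> real" where
  "gH3 a p = (if a = 1 then 1 else if a = 2 then (sinh (p$1))^2
              else (sinh (p$1))^2 * (sin (p$2))^2)"

definition volH3 :: "real^3 \<Rightarrow> real" where
  "volH3 p = (sinh (p$1))^2 * sin (p$2)"

definition levi :: "3 \<Rightarrow> 3 \<Rightarrow> 3 \<Rightarrow> real" where
  "levi a b c = (if (a,b,c) \<in> {(1,2,3),(2,3,1),(3,1,2)} then 1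
                 else if (a,b,c) \<in> {(1,3,2),(3,2,1),(2,1,3)} then -1 else 0)"

text \<open>Hodge star of an su(2)-valued 2-form F = (1/2) F_bc dx^b ^ dx^c (components F b c)
  w.r.t. g_H3, orientation sinh^2 r sin theta dr ^ dtheta ^ dphi; result: components of a 1-form.\<close>
definition hodgeH3 :: "real^3 \<Rightarrow> (3 \<Rightarrow> 3 \<Rightarrow> real^3) \<Rightarrow> 3 \<Rightarrow> real^3" where
  "hodgeH3 p F a = (\<Sum>b\<in>UNIV. \<Sum>c\<in>UNIV.
      (levi a b c * volH3 p / (2 * gH3 b p * gH3 c p)) *\<^sub>R F b c)"

definition covd :: "(3 \<Rightarrow> real^3 \<Rightarrow> real^3) \<Rightarrow> (real^3 \<Rightarrow> real^3) \<Rightarrow> 3 \<Rightarrow> real^3 \<Rightarrow> real^3" where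
  "covd A Phi a p = pd a Phi p + su2_bracket (A a p) (Phi p)"

definition curv :: "(3 \<Rightarrow> real^3 \<Rightarrow> real^3) \<Rightarrow> real^3 \<Rightarrow> 3 \<Rightarrow> 3 \<Rightarrow> real^3" where
  "curv A p b c = pd b (A c) p - pd c (A b) p + su2_bracket (A b p) (A c p)"

definition PhiL :: "(real^3 \<Rightarrow> real) \<Rightarrow> real^3 \<Rightarrow> real^3" where
  "PhiL L p = (1 / (2 * L p)) *\<^sub>R vector
     [pd 1 L p, pd 2 L p / sinh (p$1), pd 3 L p / (sinh (p$1) * sin (p$2))]"

definition AL :: "(real^3 \<Rightarrow> real) \<Rightarrow> 3 \<Rightarrow> real^3 \<Rightarrow> real^3" where
  "AL L a p =
    (if a = 1 then
       vector [0,
               pd 3 L p / (2 * L p * sinh (p$1) * sin (p$2)),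
               - pd 2 L p / (2 * L p * sinh (p$1))]
     else if a = 2 then
       vector [- pd 3 L p / (2 * L p * sin (p$2)),
               0,
               (cosh (p$1) + sinh (p$1) * pd 1 L p / L p) / 2]
     else
       vector [(cos (p$2) + sin (p$2) * pd 2 L p / L p) / 2,
               - (cosh (p$1) + sinh (p$1) * pd 1 L p / L p) * sin (p$2) / 2,
               0])"

end

theory Submission
  imports Defs
begin

lemma pd_has: "(f has_derivative f') (at p) \<Longrightarrow> pd i f p = f' (axis i 1)"
  unfolding pd_def using frechet_derivative_at by metis

lemma diff_has: "f differentiable at p \<Longrightarrow> (f has_derivative (\<lambda>h. frechet_derivative f (at p) h)) (at p)"
  using frechet_derivative_works by (metis eta_contract_eq)

lemma pd_add: "f differentiable at p \<Longrightarrow> g differentiable at p \<Longrightarrow>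
  pd i (\<lambda>x. f x + g x) p = pd i f p + pd i g p"
  apply (rule pd_has[THEN trans])
   apply (rule has_derivative_add[OF diff_has diff_has], assumption+)
  by (simp add: pd_def)

lemma pd_diff: "f differentiable at p \<Longrightarrow> g differentiable at p \<Longrightarrow>
  pd i (\<lambda>x. f x - g x) p = pd i f p - pd i g p"
  apply (rule pd_has[THEN trans])
   apply (rule has_derivative_diff[OF diff_has diff_has], assumption+)
  by (simp add: pd_def)

lemma pd_minus: "f differentiable at p \<Longrightarrow>
  pd i (\<lambda>x. - f x) p = - pd i f p"
  apply (rule pd_has[THEN trans])
   apply (rule has_derivative_minus[OF diff_has], assumption+)
  by (simp add: pd_def)

lemma pd_const: "pd i (\<lambda>x. c) p = 0"
  apply (rule pd_has[THEN trans])
   apply (rule has_derivative_const)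
  by simp

lemma pd_mult: "f differentiable at p \<Longrightarrow> g differentiable at p \<Longrightarrow>
  pd i (\<lambda>x. f x * g x :: real) p = f p * pd i g p + pd i f p * g p"
  apply (rule pd_has[THEN trans])
   apply (rule has_derivative_mult[OF diff_has diff_has], assumption+)
  by (simp add: pd_def)

lemma pd_divide: "f differentiable at p \<Longrightarrow> g differentiable at p \<Longrightarrow> g p \<noteq> 0 \<Longrightarrow>
  pd i (\<lambda>x. f x / g x :: real) p = (pd i f p * g p - f p * pd i g p) / (g p)^2"
  apply (rule pd_has[THEN trans])
   apply (rule has_derivative_divide[OF diff_has diff_has], assumption+)
  apply (simp add: pd_def)
  apply (simp add: field_simps power2_eq_square)
  done

lemma coordfun_has: "(h has_real_derivative D) (at (p$k)) \<Longrightarrow>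
  ((\<lambda>x. h (x$k)) has_derivative (\<lambda>v. D * v$k)) (at p)"
proof -
  assume h: "(h has_real_derivative D) (at (p$k))"
  have "((\<lambda>x. x$k) has_derivative (\<lambda>v. v$k)) (at p)"
    by (rule bounded_linear_imp_has_derivative) (rule bounded_linear_vec_nth)
  from has_derivative_compose[OF this h[unfolded has_field_derivative_def]]
  show ?thesis by (simp add: mult.commute)
qed

lemma coordfun_diff: "(h has_real_derivative D) (at (p$k)) \<Longrightarrow>
  (\<lambda>x. h (x$k)) differentiable at p"
  using coordfun_has differentiable_def by blast

lemma pd_coordfun: "(h has_real_derivative D) (at (p$k)) \<Longrightarrow>
  pd i (\<lambda>x. h (x$k)) p = (if i = k then D else 0)"
  by (simp add: pd_has[OF coordfun_has] axis_def)

lemma vec3_eq: "(vector [a,b,c] :: real^3) = a *\<^sub>R axis 1 1 + b *\<^sub>R axis 2 1 + c *\<^sub>R axis 3 (1::real)"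
  by (simp add: vec_eq_iff forall_3 axis_def)

lemma pd_vec3: "f1 differentiable at p \<Longrightarrow> f2 differentiable at p \<Longrightarrow> f3 differentiable at p \<Longrightarrow>
  pd i (\<lambda>x. vector [f1 x, f2 x, f3 x] :: real^3) p = vector [pd i f1 p, pd i f2 p, pd i f3 p]"
  unfolding vec3_eq
  apply (rule pd_has[THEN trans])
   apply (rule has_derivative_add has_derivative_scaleR_left diff_has | assumption)+
  by (simp add: pd_def)


lemma line_deriv:
  assumes "f differentiable at (q + s *\<^sub>R axis i 1)"
  shows "((\<lambda>s. f (q + s *\<^sub>R axis i (1::real))) has_real_derivative pd i f (q + s *\<^sub>R axis i 1)) (at s)"
proof -
  have g: "((\<lambda>s. q + s *\<^sub>R axis i (1::real)) has_derivative (\<lambda>ds. ds *\<^sub>R axis i 1)) (at s)"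
    by (auto intro!: derivative_eq_intros)
  have F: "(f has_derivative frechet_derivative f (at (q + s *\<^sub>R axis i 1))) (at (q + s *\<^sub>R axis i 1))"
    using assms frechet_derivative_works by blast
  have lin: "linear (frechet_derivative f (at (q + s *\<^sub>R axis i 1)))"
    using F has_derivative_linear by blast
  define D where "D = frechet_derivative f (at (q + s *\<^sub>R axis i 1)) (axis i 1)"
  have e: "(\<lambda>ds. frechet_derivative f (at (q + s *\<^sub>R axis i 1)) (ds *\<^sub>R axis i 1)) = (*) D"
    using linear_scale[OF lin] unfolding D_def by (auto simp: mult.commute)
  from has_derivative_compose[OF g F]
  show ?thesis unfolding has_field_derivative_def pd_def D_def[symmetric]
    using e by (simp add: o_def)
qed

lemma mixed_mvt:
  fixes f :: "real^3 \<Rightarrow> real"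
  assumes U: "open U" and h: "0 < h"
    and S: "\<And>s t. 0 \<le> s \<Longrightarrow> s \<le> h \<Longrightarrow> 0 \<le> t \<Longrightarrow> t \<le> h \<Longrightarrow>
              p + s *\<^sub>R axis i 1 + t *\<^sub>R axis j 1 \<in> U"
    and df: "f differentiable_on U" and dfi: "pd i f differentiable_on U"
  shows "\<exists>\<xi> \<eta>. 0 < \<xi> \<and> \<xi> < h \<and> 0 < \<eta> \<and> \<eta> < h \<and>
     f (p + h *\<^sub>R axis i 1 + h *\<^sub>R axis j 1) - f (p + h *\<^sub>R axis i 1) - f (p + h *\<^sub>R axis j 1) + f p
     = h^2 * pd j (pd i f) (p + \<xi> *\<^sub>R axis i 1 + \<eta> *\<^sub>R axis j 1)"
proof -
  have dfa: "\<And>x. x \<in> U \<Longrightarrow> f differentiable at x"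
    using df U differentiable_on_eq_differentiable_at by blast
  have dfia: "\<And>x. x \<in> U \<Longrightarrow> pd i f differentiable at x"
    using dfi U differentiable_on_eq_differentiable_at by blast
  define ei where "ei = axis i (1::real)"
  define ej where "ej = axis j (1::real)"
  have S': "\<And>s t. 0 \<le> s \<Longrightarrow> s \<le> h \<Longrightarrow> 0 \<le> t \<Longrightarrow> t \<le> h \<Longrightarrow> p + t *\<^sub>R ej + s *\<^sub>R ei \<in> U"
  proof -
    fix s t :: real assume st: "0 \<le> s" "s \<le> h" "0 \<le> t" "t \<le> h"
    have "p + t *\<^sub>R ej + s *\<^sub>R ei = p + s *\<^sub>R ei + t *\<^sub>R ej" by (simp add: algebra_simps)
    then show "p + t *\<^sub>R ej + s *\<^sub>R ei \<in> U" using S[OF st] unfolding ei_def ej_def by metis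
  qed
  have "\<exists>z. 0 < z \<and> z < h \<and>
     (f (p + h *\<^sub>R ej + h *\<^sub>R ei) - f (p + h *\<^sub>R ei)) - (f (p + h *\<^sub>R ej + 0 *\<^sub>R ei) - f (p + 0 *\<^sub>R ei))
     = (h - 0) * (pd i f (p + h *\<^sub>R ej + z *\<^sub>R ei) - pd i f (p + z *\<^sub>R ei))"
  proof (rule MVT2[where f = "\<lambda>s. f (p + h *\<^sub>R ej + s *\<^sub>R ei) - f (p + s *\<^sub>R ei)"])
    show "0 < h" by fact
    fix x assume x: "0 \<le> x" "x \<le> h"
    have u1: "p + h *\<^sub>R ej + x *\<^sub>R ei \<in> U" using S' x h by auto
    have u2: "p + x *\<^sub>R ei \<in> U" using S'[of x 0] x h by auto
    show "((\<lambda>s. f (p + h *\<^sub>R ej + s *\<^sub>R ei) - f (p + s *\<^sub>R ei)) has_real_derivative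
          pd i f (p + h *\<^sub>R ej + x *\<^sub>R ei) - pd i f (p + x *\<^sub>R ei)) (at x)"
      unfolding ei_def
      by (rule DERIV_diff; rule line_deriv; use dfa u1 u2 ei_def in auto)
  qed
  then obtain \<xi> where xi: "0 < \<xi>" "\<xi> < h"
    and e1: "(f (p + h *\<^sub>R ej + h *\<^sub>R ei) - f (p + h *\<^sub>R ei)) - (f (p + h *\<^sub>R ej + 0 *\<^sub>R ei) - f (p + 0 *\<^sub>R ei))
     = (h - 0) * (pd i f (p + h *\<^sub>R ej + \<xi> *\<^sub>R ei) - pd i f (p + \<xi> *\<^sub>R ei))" by blast
  have "\<exists>z. 0 < z \<and> z < h \<and>
     pd i f (p + \<xi> *\<^sub>R ei + h *\<^sub>R ej) - pd i f (p + \<xi> *\<^sub>R ei + 0 *\<^sub>R ej)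
     = (h - 0) * pd j (pd i f) (p + \<xi> *\<^sub>R ei + z *\<^sub>R ej)"
  proof (rule MVT2[where f = "\<lambda>t. pd i f (p + \<xi> *\<^sub>R ei + t *\<^sub>R ej)"])
    show "0 < h" by fact
    fix x assume x: "0 \<le> x" "x \<le> h"
    have u1: "p + \<xi> *\<^sub>R ei + x *\<^sub>R ej \<in> U" using S[of \<xi> x] x xi unfolding ei_def ej_def by auto
    show "((\<lambda>t. pd i f (p + \<xi> *\<^sub>R ei + t *\<^sub>R ej)) has_real_derivative
          pd j (pd i f) (p + \<xi> *\<^sub>R ei + x *\<^sub>R ej)) (at x)"
      unfolding ej_def
      by (rule line_deriv; use dfia u1 ej_def in auto)
  qed
  then obtain \<eta> where eta: "0 < \<eta>" "\<eta> < h"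
    and e2: "pd i f (p + \<xi> *\<^sub>R ei + h *\<^sub>R ej) - pd i f (p + \<xi> *\<^sub>R ei + 0 *\<^sub>R ej)
     = (h - 0) * pd j (pd i f) (p + \<xi> *\<^sub>R ei + \<eta> *\<^sub>R ej)" by blast
  have c1: "p + h *\<^sub>R ej + \<xi> *\<^sub>R ei = p + \<xi> *\<^sub>R ei + h *\<^sub>R ej" by (simp add: algebra_simps)
  have c2: "p + h *\<^sub>R ej + h *\<^sub>R ei = p + h *\<^sub>R ei + h *\<^sub>R ej" by (simp add: algebra_simps)
  have "f (p + h *\<^sub>R ei + h *\<^sub>R ej) - f (p + h *\<^sub>R ei) - f (p + h *\<^sub>R ej) + f p
     = h^2 * pd j (pd i f) (p + \<xi> *\<^sub>R ei + \<eta> *\<^sub>R ej)"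
    using e1 e2 c1 c2 by (simp add: power2_eq_square algebra_simps)
  then show ?thesis using xi eta unfolding ei_def ej_def by blast
qed

lemma schwarz:
  fixes f :: "real^3 \<Rightarrow> real"
  assumes U: "open U" and pU: "p \<in> U"
    and df: "f differentiable_on U" and dfi: "pd i f differentiable_on U"
    and dfj: "pd j f differentiable_on U"
    and c1: "continuous_on U (pd j (pd i f))" and c2: "continuous_on U (pd i (pd j f))"
  shows "pd j (pd i f) p = pd i (pd j f) p"
proof (rule ccontr)
  assume ne: "pd j (pd i f) p \<noteq> pd i (pd j f) p"
  define e where "e = \<bar>pd j (pd i f) p - pd i (pd j f) p\<bar> / 2"
  have e: "e > 0" using ne unfolding e_def by auto
  obtain d0 where d0: "d0 > 0" "ball p d0 \<subseteq> U" using U pU open_contains_ball by blast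
  have ic1: "isCont (pd j (pd i f)) p" using c1 U pU continuous_on_eq_continuous_at by blast
  have ic2: "isCont (pd i (pd j f)) p" using c2 U pU continuous_on_eq_continuous_at by blast
  obtain d1 where d1: "d1 > 0" "\<And>x. dist x p < d1 \<Longrightarrow> dist (pd j (pd i f) x) (pd j (pd i f) p) < e"
    using ic1[unfolded continuous_at_eps_delta] e by blast
  obtain d2 where d2: "d2 > 0" "\<And>x. dist x p < d2 \<Longrightarrow> dist (pd i (pd j f) x) (pd i (pd j f) p) < e"
    using ic2[unfolded continuous_at_eps_delta] e by blast
  define h where "h = min d0 (min d1 d2) / 3"
  have h: "h > 0" using d0 d1 d2 unfolding h_def by auto
  have nrm: "\<And>s t k l. 0 \<le> s \<Longrightarrow> s \<le> h \<Longrightarrow> 0 \<le> t \<Longrightarrow> t \<le> h \<Longrightarrow>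
      dist (p + s *\<^sub>R axis k (1::real) + t *\<^sub>R axis l 1) p < min d0 (min d1 d2)"
  proof -
    fix s t :: real and k l :: 3
    assume st: "0 \<le> s" "s \<le> h" "0 \<le> t" "t \<le> h"
    have "dist (p + s *\<^sub>R axis k (1::real) + t *\<^sub>R axis l 1) p = norm (s *\<^sub>R axis k (1::real) + t *\<^sub>R axis l 1)"
      by (simp add: dist_norm)
    also have "\<dots> \<le> norm (s *\<^sub>R axis k (1::real)) + norm (t *\<^sub>R axis l (1::real))"
      by (rule norm_triangle_ineq)
    also have "\<dots> = s + t" using st by simp
    also have "\<dots> < min d0 (min d1 d2)" using st h unfolding h_def by linarith
    finally show "dist (p + s *\<^sub>R axis k (1::real) + t *\<^sub>R axis l 1) p < min d0 (min d1 d2)" .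
  qed
  have inU: "\<And>s t k l. 0 \<le> s \<Longrightarrow> s \<le> h \<Longrightarrow> 0 \<le> t \<Longrightarrow> t \<le> h \<Longrightarrow>
      p + s *\<^sub>R axis k (1::real) + t *\<^sub>R axis l 1 \<in> U"
  proof -
    fix s t :: real and k l :: 3
    assume st: "0 \<le> s" "s \<le> h" "0 \<le> t" "t \<le> h"
    have "dist (p + s *\<^sub>R axis k (1::real) + t *\<^sub>R axis l 1) p < d0" using nrm[OF st, of k l] by simp
    then show "p + s *\<^sub>R axis k (1::real) + t *\<^sub>R axis l 1 \<in> U" using d0(2) by (auto simp: dist_commute subset_iff)
  qed
  obtain x1 y1 where xy1: "0 < x1" "x1 < h" "0 < y1" "y1 < h"
    and E1: "f (p + h *\<^sub>R axis i 1 + h *\<^sub>R axis j 1) - f (p + h *\<^sub>R axis i 1) - f (p + h *\<^sub>R axis j 1) + f p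
     = h^2 * pd j (pd i f) (p + x1 *\<^sub>R axis i 1 + y1 *\<^sub>R axis j 1)"
    using mixed_mvt[OF U h inU df dfi] by blast
  obtain x2 y2 where xy2: "0 < x2" "x2 < h" "0 < y2" "y2 < h"
    and E2: "f (p + h *\<^sub>R axis j 1 + h *\<^sub>R axis i 1) - f (p + h *\<^sub>R axis j 1) - f (p + h *\<^sub>R axis i 1) + f p
     = h^2 * pd i (pd j f) (p + x2 *\<^sub>R axis j 1 + y2 *\<^sub>R axis i 1)"
    using mixed_mvt[OF U h inU df dfj] by blast
  have pq: "p + h *\<^sub>R axis j 1 + h *\<^sub>R axis i 1 = p + h *\<^sub>R axis i 1 + h *\<^sub>R axis j (1::real)"
    by (simp add: algebra_simps)
  have "h^2 * pd j (pd i f) (p + x1 *\<^sub>R axis i 1 + y1 *\<^sub>R axis j 1)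
      = h^2 * pd i (pd j f) (p + x2 *\<^sub>R axis j 1 + y2 *\<^sub>R axis i 1)" using E1 E2[unfolded pq] by linarith
  then have eq: "pd j (pd i f) (p + x1 *\<^sub>R axis i 1 + y1 *\<^sub>R axis j 1)
      = pd i (pd j f) (p + x2 *\<^sub>R axis j 1 + y2 *\<^sub>R axis i 1)" using h by simp
  have a1: "dist (pd j (pd i f) (p + x1 *\<^sub>R axis i 1 + y1 *\<^sub>R axis j 1)) (pd j (pd i f) p) < e"
  proof -
    have "dist (p + x1 *\<^sub>R axis i 1 + y1 *\<^sub>R axis j 1) p < d1" using nrm[of x1 y1 i j] xy1 by simp
    then show ?thesis by (rule d1(2))
  qed
  have a2: "dist (pd i (pd j f) (p + x2 *\<^sub>R axis j 1 + y2 *\<^sub>R axis i 1)) (pd i (pd j f) p) < e"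
  proof -
    have "dist (p + x2 *\<^sub>R axis j 1 + y2 *\<^sub>R axis i 1) p < d2" using nrm[of x2 y2 j i] xy2 by simp
    then show ?thesis by (rule d2(2))
  qed
  have e2: "\<bar>pd j (pd i f) p - pd i (pd j f) p\<bar> = 2 * e" unfolding e_def by simp
  define X where "X = pd j (pd i f) (p + x1 *\<^sub>R axis i 1 + y1 *\<^sub>R axis j 1)"
  have b1: "-e < X - pd j (pd i f) p \<and> X - pd j (pd i f) p < e"
    using a1 unfolding dist_real_def X_def abs_less_iff by linarith
  have b2: "-e < X - pd i (pd j f) p \<and> X - pd i (pd j f) p < e"
    using a2 eq unfolding dist_real_def X_def abs_less_iff by linarith
  have "pd j (pd i f) p - pd i (pd j f) p = 2 * e \<or> pd i (pd j f) p - pd j (pd i f) p = 2 * e"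
    using e2 by (cases "pd j (pd i f) p - pd i (pd j f) p \<ge> 0") auto
  then show False using b1 b2 by linarith
qed

lemma c1a: fixes l sh ch st ct u1 u2 u3 w11 w12 w13 w22 w23 w33 :: real
  assumes "l \<noteq> 0" "sh \<noteq> 0" "st \<noteq> 0" "ch^2 = sh^2 + 1"
  shows "w11 / (2 * l) - u1 * u1 / (2 * (l)\<^sup>2) + (u3 * u3 / (2 * (l * (l * (sh * (sh * (st * st)))))) + u2 * u2 / (2 * (l * (l * (sh * sh))))) = st * (((st)\<^sup>2 * ((sh)\<^sup>2 * (w11 + 2 * ch * u1 / sh + l) + w22 + ct * u2 / st) * (2 * l * st) + u3 * (2 * u3 * st)) / (2 * l * st)\<^sup>2 - (((st * w22 + ct * u2) * l * 2 - st * u2 * u2 * 2) / (l)\<^sup>2 - st * 2) / 4 + st * ((ch + sh * u1 / l) * (- ch - sh * u1 / l)) / 2) / (2 * ((sh)\<^sup>2 * (st)\<^sup>2)) - st * ((((st * w22 + ct * u2) * l * 2 - st * u2 * u2 * 2) / (l)\<^sup>2 - st * 2) / 4 - ((st)\<^sup>2 * ((sh)\<^sup>2 * (w11 + 2 * ch * u1 / sh + l) + w22 + ct * u2 / st) * (2 * l * st) + u3 * (2 * u3 * st)) / (2 * l * st)\<^sup>2 - st * ((ch + sh * u1 / l) * (- ch - sh * u1 / l)) / 2) / (2 * ((sh)\<^sup>2 * (st)\<^sup>2))"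
proof -
  have "(w11 / (2 * l) - u1 * u1 / (2 * (l)\<^sup>2) + (u3 * u3 / (2 * (l * (l * (sh * (sh * (st * st)))))) + u2 * u2 / (2 * (l * (l * (sh * sh)))))) - (st * (((st)\<^sup>2 * ((sh)\<^sup>2 * (w11 + 2 * ch * u1 / sh + l) + w22 + ct * u2 / st) * (2 * l * st) + u3 * (2 * u3 * st)) / (2 * l * st)\<^sup>2 - (((st * w22 + ct * u2) * l * 2 - st * u2 * u2 * 2) / (l)\<^sup>2 - st * 2) / 4 + st * ((ch + sh * u1 / l) * (- ch - sh * u1 / l)) / 2) / (2 * ((sh)\<^sup>2 * (st)\<^sup>2)) - st * ((((st * w22 + ct * u2) * l * 2 - st * u2 * u2 * 2) / (l)\<^sup>2 - st * 2) / 4 - ((st)\<^sup>2 * ((sh)\<^sup>2 * (w11 + 2 * ch * u1 / sh + l) + w22 + ct * u2 / st) * (2 * l * st) + u3 * (2 * u3 * st)) / (2 * l * st)\<^sup>2 - st * ((ch + sh * u1 / l) * (- ch - sh * u1 / l)) / 2) / (2 * ((sh)\<^sup>2 * (st)\<^sup>2))) = (ch^2 - sh^2 - 1) / (2 * sh^2)"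
    apply (simp add: field_simps assms(1-3))
    apply algebra
    done
  then show ?thesis using assms(4) by simp
qed
lemma c1b: fixes l sh ch st ct u1 u2 u3 w11 w12 w13 w22 w23 w33 :: real
  assumes "l \<noteq> 0" "sh \<noteq> 0" "st \<noteq> 0"
  shows "(w12 * sh - u2 * ch) / (2 * l * (sh)\<^sup>2) - u1 * u2 / (2 * (l)\<^sup>2 * sh) - u1 * u2 / (2 * (l * (l * sh))) = st * (- (((- ch - sh * u1 / l) * ct * 2 - (sh * w12 * l - sh * u1 * u2) * st * 2 / (l)\<^sup>2) / 4) - (ch + sh * u1 / l) * (ct + st * u2 / l) / 2) / (2 * ((sh)\<^sup>2 * (st)\<^sup>2)) - st * (((- ch - sh * u1 / l) * ct * 2 - (sh * w12 * l - sh * u1 * u2) * st * 2 / (l)\<^sup>2) / 4 + (ch + sh * u1 / l) * (ct + st * u2 / l) / 2) / (2 * ((sh)\<^sup>2 * (st)\<^sup>2))"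
  apply (simp add: field_simps assms)
  apply algebra
  done
lemma c1c: fixes l sh ch st ct u1 u2 u3 w11 w12 w13 w22 w23 w33 :: real
  assumes "l \<noteq> 0" "sh \<noteq> 0" "st \<noteq> 0"
  shows "(w13 * (sh * st) - u3 * (ch * st)) / (2 * l * (sh * st)\<^sup>2) - u1 * u3 / (2 * (l)\<^sup>2 * (sh * st)) - u1 * u3 / (2 * (l * (l * (sh * st)))) = st * ((sh * w13 * l * 2 - sh * u1 * u3 * 2) / ((l)\<^sup>2 * 4) + u3 * (- ch - sh * u1 / l) / (2 * l)) / (2 * ((sh)\<^sup>2 * (st)\<^sup>2)) - st * (- ((sh * w13 * l * 2 - sh * u1 * u3 * 2) / ((l)\<^sup>2 * 4)) - u3 * (- ch - sh * u1 / l) / (2 * l)) / (2 * ((sh)\<^sup>2 * (st)\<^sup>2))"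
  apply (simp add: field_simps assms)
  apply algebra
  done
lemma c2a: fixes l sh ch st ct u1 u2 u3 w11 w12 w13 w22 w23 w33 :: real
  assumes "l \<noteq> 0" "sh \<noteq> 0" "st \<noteq> 0"
  shows "w12 / (2 * l) - u2 * u1 / (2 * (l)\<^sup>2) - u2 * (ch + sh * u1 / l) / (2 * (l * sh)) = st * ((st * w12 * l * 2 - st * u2 * u1 * 2) / ((l)\<^sup>2 * 4) + u2 * (st * (- ch - sh * u1 / l)) / (2 * (l * sh))) / (2 * (st)\<^sup>2) - st * (- ((st * w12 * l * 2 - st * u2 * u1 * 2) / ((l)\<^sup>2 * 4)) - u2 * (st * (- ch - sh * u1 / l)) / (2 * (l * sh))) / (2 * (st)\<^sup>2)"
  apply (simp add: field_simps assms)
  apply algebra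
  done
lemma c2b: fixes l sh ch st ct u1 u2 u3 w11 w12 w13 w22 w23 w33 :: real
  assumes "l \<noteq> 0" "sh \<noteq> 0" "st \<noteq> 0"
  shows "w22 * sh / (2 * l * (sh)\<^sup>2) - u2 * u2 / (2 * (l)\<^sup>2 * sh) + (u1 * (ch + sh * u1 / l) / (2 * l) + u3 * u3 / (2 * (l * (l * (sh * (st * st)))))) = st * (st * (- sh - ((sh * w11 + ch * u1) * l - sh * u1 * u1) / (l)\<^sup>2) / 2 - (- ((st)\<^sup>2 * ((sh)\<^sup>2 * (w11 + 2 * ch * u1 / sh + l) + w22 + ct * u2 / st) * (2 * l * sh * st)) - u3 * (2 * u3 * sh * st)) / (2 * l * sh * st)\<^sup>2 - u2 * (ct + st * u2 / l) / (2 * (l * sh))) / (2 * (st)\<^sup>2) - st * ((- ((st)\<^sup>2 * ((sh)\<^sup>2 * (w11 + 2 * ch * u1 / sh + l) + w22 + ct * u2 / st) * (2 * l * sh * st)) - u3 * (2 * u3 * sh * st)) / (2 * l * sh * st)\<^sup>2 - st * (- sh - ((sh * w11 + ch * u1) * l - sh * u1 * u1) / (l)\<^sup>2) / 2 + u2 * (ct + st * u2 / l) / (2 * (l * sh))) / (2 * (st)\<^sup>2)"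
  apply (simp add: field_simps assms)
  apply algebra
  done
lemma c2c: fixes l sh ch st ct u1 u2 u3 w11 w12 w13 w22 w23 w33 :: real
  assumes "l \<noteq> 0" "sh \<noteq> 0" "st \<noteq> 0"
  shows "(w23 * (sh * st) - u3 * (sh * ct)) / (2 * l * (sh * st)\<^sup>2) - u2 * u3 / (2 * (l)\<^sup>2 * (sh * st)) - u2 * u3 / (2 * (l * (l * (sh * st)))) = st * (- ((u2 * (2 * u3 * sh) - w23 * (2 * l * sh)) / (2 * l * sh)\<^sup>2) - u3 * (ct + st * u2 / l) / (2 * (l * (sh * st)))) / (2 * (st)\<^sup>2) - st * ((u2 * (2 * u3 * sh) - w23 * (2 * l * sh)) / (2 * l * sh)\<^sup>2 + u3 * (ct + st * u2 / l) / (2 * (l * (sh * st)))) / (2 * (st)\<^sup>2)"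
  apply (simp add: field_simps assms)
  apply algebra
  done
lemma c3a: fixes l sh ch st ct u1 u2 u3 w11 w12 w13 w22 w23 w33 :: real
  assumes "l \<noteq> 0" "sh \<noteq> 0" "st \<noteq> 0"
  shows "w13 / (2 * l) - u3 * u1 / (2 * (l)\<^sup>2) + u3 * (- ch - sh * u1 / l) / (2 * (l * sh)) = st * (- ((u3 * (2 * u1 * st) - w13 * (2 * l * st)) / (2 * l * st)\<^sup>2) - u3 * (ch + sh * u1 / l) / (2 * (l * (sh * st)))) / 2 - st * ((u3 * (2 * u1 * st) - w13 * (2 * l * st)) / (2 * l * st)\<^sup>2 + u3 * (ch + sh * u1 / l) / (2 * (l * (sh * st)))) / 2"
  apply (simp add: field_simps assms)
  apply algebra
  done
lemma c3b: fixes l sh ch st ct u1 u2 u3 w11 w12 w13 w22 w23 w33 :: real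
  assumes "l \<noteq> 0" "sh \<noteq> 0" "st \<noteq> 0"
  shows "w23 * sh / (2 * l * (sh)\<^sup>2) - u3 * u2 / (2 * (l)\<^sup>2 * sh) - u3 * (ct + st * u2 / l) / (2 * (l * (sh * st))) = st * ((w23 * (2 * l * sh * st) - u3 * (2 * l * sh * ct + 2 * u2 * sh * st)) / (2 * l * sh * st)\<^sup>2 - u2 * u3 / (2 * (l * (l * (sh * st))))) / 2 - st * (u2 * u3 / (2 * (l * (l * (sh * st)))) - (w23 * (2 * l * sh * st) - u3 * (2 * l * sh * ct + 2 * u2 * sh * st)) / (2 * l * sh * st)\<^sup>2) / 2"
  apply (simp add: field_simps assms)
  apply algebra
  done
lemma c3c: fixes l sh ch st ct u1 u2 u3 w11 w12 w13 w22 w23 w33 :: real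
  assumes "l \<noteq> 0" "sh \<noteq> 0" "st \<noteq> 0"
  shows "- ((st)\<^sup>2 * ((sh)\<^sup>2 * (w11 + 2 * ch * u1 / sh + l) + w22 + ct * u2 / st) * (sh * st) / (2 * l * (sh * st)\<^sup>2)) - u3 * u3 / (2 * (l)\<^sup>2 * (sh * st)) + (u2 * (ct + st * u2 / l) / (2 * (l * sh)) - u1 * (st * (- ch - sh * u1 / l)) / (2 * l)) = st * ((u2 * (2 * u2 * sh) - w22 * (2 * l * sh)) / (2 * l * sh)\<^sup>2 - (sh * 2 + ((sh * w11 + ch * u1) * l * 2 - sh * u1 * u1 * 2) / (l)\<^sup>2) / 4 - u3 * u3 / (2 * (l * (l * (sh * (st * st)))))) / 2 - st * ((sh * 2 + ((sh * w11 + ch * u1) * l * 2 - sh * u1 * u1 * 2) / (l)\<^sup>2) / 4 - (u2 * (2 * u2 * sh) - w22 * (2 * l * sh)) / (2 * l * sh)\<^sup>2 + u3 * u3 / (2 * (l * (l * (sh * (st * st)))))) / 2"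
  apply (simp add: field_simps assms)
  apply algebra
  done

lemma levi_vals:
  "levi 1 2 3 = 1" "levi 2 3 1 = 1" "levi 3 1 2 = 1"
  "levi 1 3 2 = -1" "levi 3 2 1 = -1" "levi 2 1 3 = -1"
  "levi a a c = 0" "levi a b b = 0" "levi a b a = 0"
  by (auto simp: levi_def)

lemma gH3_vals: "gH3 1 p = 1" "gH3 2 p = (sinh (p$1))^2" "gH3 3 p = (sinh (p$1))^2 * (sin (p$2))^2"
  by (auto simp: gH3_def)

lemma pd_sinh: "pd i (\<lambda>x. sinh (x$k)) (p::real^3) = (if i = k then cosh (p$k) else 0)"
  by (rule pd_coordfun) (auto intro!: derivative_eq_intros)
lemma pd_cosh: "pd i (\<lambda>x. cosh (x$k)) (p::real^3) = (if i = k then sinh (p$k) else 0)"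
  by (rule pd_coordfun) (auto intro!: derivative_eq_intros)
lemma pd_sin: "pd i (\<lambda>x. sin (x$k)) (p::real^3) = (if i = k then cos (p$k) else 0)"
  by (rule pd_coordfun) (auto intro!: derivative_eq_intros)
lemma pd_cos: "pd i (\<lambda>x. cos (x$k)) (p::real^3) = (if i = k then - sin (p$k) else 0)"
  by (rule pd_coordfun) (auto intro!: derivative_eq_intros)
lemma d_sinh: "(\<lambda>x. sinh (x$k)) differentiable at (p::real^3)"
  by (rule coordfun_diff[where D="cosh (p$k)"]) (auto intro!: derivative_eq_intros)
lemma d_cosh: "(\<lambda>x. cosh (x$k)) differentiable at (p::real^3)"
  by (rule coordfun_diff[where D="sinh (p$k)"]) (auto intro!: derivative_eq_intros)
lemma d_sin: "(\<lambda>x. sin (x$k)) differentiable at (p::real^3)"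
  by (rule coordfun_diff[where D="cos (p$k)"]) (auto intro!: derivative_eq_intros)
lemma d_cos: "(\<lambda>x. cos (x$k)) differentiable at (p::real^3)"
  by (rule coordfun_diff[where D="- sin (p$k)"]) (auto intro!: derivative_eq_intros)

lemma PhiL_eq: "PhiL L = (\<lambda>x. vector [(1/(2*L x)) * pd 1 L x, (1/(2*L x)) * (pd 2 L x / sinh (x$1)),
   (1/(2*L x)) * (pd 3 L x / (sinh (x$1) * sin (x$2)))])"
  by (rule ext) (simp add: PhiL_def vec_eq_iff forall_3)

lemma AL_1: "AL L 1 = (\<lambda>p. vector [0,
               pd 3 L p / (2 * L p * sinh (p$1) * sin (p$2)),
               - pd 2 L p / (2 * L p * sinh (p$1))])"
  by (rule ext) (simp add: AL_def)
lemma AL_2: "AL L 2 = (\<lambda>p. vector [- pd 3 L p / (2 * L p * sin (p$2)),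
               0,
               (cosh (p$1) + sinh (p$1) * pd 1 L p / L p) / 2])"
  by (rule ext) (simp add: AL_def)
lemma AL_3: "AL L 3 = (\<lambda>p. vector [(cos (p$2) + sin (p$2) * pd 2 L p / L p) / 2,
               - (cosh (p$1) + sinh (p$1) * pd 1 L p / L p) * sin (p$2) / 2,
               0])"
  by (rule ext) (simp add: AL_def)

lemma bracket_eq: "su2_bracket X Y = vector [2 * (X$2 * Y$3 - X$3 * Y$2), 2 * (X$3 * Y$1 - X$1 * Y$3), 2 * (X$1 * Y$2 - X$2 * Y$1)]"
  by (simp add: su2_bracket_def to_quat_def algebra_simps)

lemma comp1:
  fixes L :: "real^3 \<Rightarrow> real" and p :: "real^3"
  assumes r0: "p$1 \<noteq> 0" and sh: "sinh (p$1) \<noteq> 0" and st: "sin (p$2) \<noteq> 0" and Lp: "L p \<noteq> 0"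
    and d0: "L differentiable at p" and d1: "pd 1 L differentiable at p"
    and d2: "pd 2 L differentiable at p" and d3: "pd 3 L differentiable at p"
    and s12: "pd 2 (pd 1 L) p = pd 1 (pd 2 L) p"
    and s13: "pd 3 (pd 1 L) p = pd 1 (pd 3 L) p"
    and s23: "pd 3 (pd 2 L) p = pd 2 (pd 3 L) p"
    and H33: "pd 3 (pd 3 L) p = -((sin (p$2))^2) * ((sinh (p$1))^2 * (pd 1 (pd 1 L) p
              + 2 * (cosh (p$1) / sinh (p$1)) * pd 1 L p + L p)
            + pd 2 (pd 2 L) p + (cos (p$2) / sin (p$2)) * pd 2 L p)"
  shows "covd (AL L) (PhiL L) 1 p = - hodgeH3 p (curv (AL L) p) 1"
  unfolding covd_def hodgeH3_def curv_def sum_3 levi_vals gH3_vals AL_1 AL_2 AL_3 PhiL_eq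
  apply (simp only: pd_vec3 pd_add pd_diff pd_minus pd_const pd_mult pd_divide pd_sinh pd_cosh pd_sin pd_cos
     differentiable_add differentiable_diff differentiable_minus differentiable_const differentiable_mult
     differentiable_divide d_sinh d_cosh d_sin d_cos d0 d1 d2 d3 sh st Lp mult_eq_0_iff de_Morgan_disj
     simp_thms zero_neq_numeral divide_eq_0_iff)
  apply (simp add: bracket_eq vec_eq_iff forall_3 s12 s13 s23 H33 volH3_def r0 st Lp)
  apply (intro conjI)
  apply (rule c1a[OF Lp sh st cosh_square_eq])
  apply (rule c1b[OF Lp sh st])
  apply (rule c1c[OF Lp sh st])
  done

lemma comp2:
  fixes L :: "real^3 \<Rightarrow> real" and p :: "real^3"
  assumes r0: "p$1 \<noteq> 0" and sh: "sinh (p$1) \<noteq> 0" and st: "sin (p$2) \<noteq> 0" and Lp: "L p \<noteq> 0"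
    and d0: "L differentiable at p" and d1: "pd 1 L differentiable at p"
    and d2: "pd 2 L differentiable at p" and d3: "pd 3 L differentiable at p"
    and s12: "pd 2 (pd 1 L) p = pd 1 (pd 2 L) p"
    and s13: "pd 3 (pd 1 L) p = pd 1 (pd 3 L) p"
    and s23: "pd 3 (pd 2 L) p = pd 2 (pd 3 L) p"
    and H33: "pd 3 (pd 3 L) p = -((sin (p$2))^2) * ((sinh (p$1))^2 * (pd 1 (pd 1 L) p
              + 2 * (cosh (p$1) / sinh (p$1)) * pd 1 L p + L p)
            + pd 2 (pd 2 L) p + (cos (p$2) / sin (p$2)) * pd 2 L p)"
  shows "covd (AL L) (PhiL L) 2 p = - hodgeH3 p (curv (AL L) p) 2"
  unfolding covd_def hodgeH3_def curv_def sum_3 levi_vals gH3_vals AL_1 AL_2 AL_3 PhiL_eq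
  apply (simp only: pd_vec3 pd_add pd_diff pd_minus pd_const pd_mult pd_divide pd_sinh pd_cosh pd_sin pd_cos
     differentiable_add differentiable_diff differentiable_minus differentiable_const differentiable_mult
     differentiable_divide d_sinh d_cosh d_sin d_cos d0 d1 d2 d3 sh st Lp mult_eq_0_iff de_Morgan_disj
     simp_thms zero_neq_numeral divide_eq_0_iff)
  apply (simp add: bracket_eq vec_eq_iff forall_3 s12 s13 s23 H33 volH3_def r0 st Lp)
  apply (intro conjI)
  apply (rule c2a[OF Lp sh st])
  apply (rule c2b[OF Lp sh st])
  apply (rule c2c[OF Lp sh st])
  done

lemma comp3:
  fixes L :: "real^3 \<Rightarrow> real" and p :: "real^3"
  assumes r0: "p$1 \<noteq> 0" and sh: "sinh (p$1) \<noteq> 0" and st: "sin (p$2) \<noteq> 0" and Lp: "L p \<noteq> 0"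
    and d0: "L differentiable at p" and d1: "pd 1 L differentiable at p"
    and d2: "pd 2 L differentiable at p" and d3: "pd 3 L differentiable at p"
    and s12: "pd 2 (pd 1 L) p = pd 1 (pd 2 L) p"
    and s13: "pd 3 (pd 1 L) p = pd 1 (pd 3 L) p"
    and s23: "pd 3 (pd 2 L) p = pd 2 (pd 3 L) p"
    and H33: "pd 3 (pd 3 L) p = -((sin (p$2))^2) * ((sinh (p$1))^2 * (pd 1 (pd 1 L) p
              + 2 * (cosh (p$1) / sinh (p$1)) * pd 1 L p + L p)
            + pd 2 (pd 2 L) p + (cos (p$2) / sin (p$2)) * pd 2 L p)"
  shows "covd (AL L) (PhiL L) 3 p = - hodgeH3 p (curv (AL L) p) 3"
  unfolding covd_def hodgeH3_def curv_def sum_3 levi_vals gH3_vals AL_1 AL_2 AL_3 PhiL_eq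
  apply (simp only: pd_vec3 pd_add pd_diff pd_minus pd_const pd_mult pd_divide pd_sinh pd_cosh pd_sin pd_cos
     differentiable_add differentiable_diff differentiable_minus differentiable_const differentiable_mult
     differentiable_divide d_sinh d_cosh d_sin d_cos d0 d1 d2 d3 sh st Lp mult_eq_0_iff de_Morgan_disj
     simp_thms zero_neq_numeral divide_eq_0_iff)
  apply (simp add: bracket_eq vec_eq_iff forall_3 s12 s13 s23 H33 volH3_def r0 st Lp)
  apply (intro conjI)
  apply (rule c3a[OF Lp sh st])
  apply (rule c3b[OF Lp sh st])
  apply (rule c3c[OF Lp sh st])
  done


theorem mainTheorem1:
  fixes U :: "(real^3) set" and L :: "real^3 \<Rightarrow> real"
  assumes "open U"
    and "U \<subseteq> {p. 0 < p$1 \<and> 0 < p$2 \<and> p$2 < pi}"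
    and "smooth_on U L"
    and "\<forall>p\<in>U. L p > 0"
    and "\<forall>p\<in>U. (sinh (p$1))^2 * (pd 1 (pd 1 L) p
              + 2 * (cosh (p$1) / sinh (p$1)) * pd 1 L p + L p)
            + pd 2 (pd 2 L) p + (cos (p$2) / sin (p$2)) * pd 2 L p
            + (1 / (sin (p$2))^2) * pd 3 (pd 3 L) p = 0"
  shows "\<forall>p\<in>U. \<forall>a. covd (AL L) (PhiL L) a p = - hodgeH3 p (curv (AL L) p) a"
proof (intro ballI allI)
  fix p and a :: 3 assume pU: "p \<in> U"
  have r: "0 < p$1" and t: "0 < p$2" "p$2 < pi" using assms(2) pU by auto
  have r0: "p$1 \<noteq> 0" using r by simp
  have sh: "sinh (p$1) \<noteq> 0" using r by simp
  have st: "sin (p$2) \<noteq> 0" using sin_gt_zero[OF t] by linarith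
  have Lp: "L p \<noteq> 0" using assms(4) pU by force
  have sm: "\<And>is. iter_pd is L differentiable_on U" using assms(3) smooth_on_def by blast
  have dat: "\<And>is. iter_pd is L differentiable at p"
    using sm assms(1) pU differentiable_on_eq_differentiable_at by blast
  have d0: "L differentiable at p" using dat[of "[]"] by simp
  have d1: "pd 1 L differentiable at p" using dat[of "[1]"] by simp
  have d2: "pd 2 L differentiable at p" using dat[of "[2]"] by simp
  have d3: "pd 3 L differentiable at p" using dat[of "[3]"] by simp
  have cont: "\<And>is. continuous_on U (iter_pd is L)" using sm differentiable_imp_continuous_on by blast
  have s12: "pd 2 (pd 1 L) p = pd 1 (pd 2 L) p"
    using schwarz[OF assms(1) pU, of L 1 2] sm[of "[]"] sm[of "[1]"] sm[of "[2]"] cont[of "[2,1]"] cont[of "[1,2]"] by simp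
  have s13: "pd 3 (pd 1 L) p = pd 1 (pd 3 L) p"
    using schwarz[OF assms(1) pU, of L 1 3] sm[of "[]"] sm[of "[1]"] sm[of "[3]"] cont[of "[3,1]"] cont[of "[1,3]"] by simp
  have s23: "pd 3 (pd 2 L) p = pd 2 (pd 3 L) p"
    using schwarz[OF assms(1) pU, of L 2 3] sm[of "[]"] sm[of "[2]"] sm[of "[3]"] cont[of "[3,2]"] cont[of "[2,3]"] by simp
  have H: "(sinh (p$1))^2 * (pd 1 (pd 1 L) p
              + 2 * (cosh (p$1) / sinh (p$1)) * pd 1 L p + L p)
            + pd 2 (pd 2 L) p + (cos (p$2) / sin (p$2)) * pd 2 L p
            + (1 / (sin (p$2))^2) * pd 3 (pd 3 L) p = 0" using assms(5) pU by blast
  define R where "R = (sinh (p$1))^2 * (pd 1 (pd 1 L) p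
              + 2 * (cosh (p$1) / sinh (p$1)) * pd 1 L p + L p)
            + pd 2 (pd 2 L) p + (cos (p$2) / sin (p$2)) * pd 2 L p"
  have H': "(1 / (sin (p$2))^2) * pd 3 (pd 3 L) p = - R" using H unfolding R_def by linarith
  have "pd 3 (pd 3 L) p = (sin (p$2))^2 * ((1 / (sin (p$2))^2) * pd 3 (pd 3 L) p)" using st by simp
  also have "\<dots> = -((sin (p$2))^2) * R" using H' by simp
  finally have H33: "pd 3 (pd 3 L) p = -((sin (p$2))^2) * ((sinh (p$1))^2 * (pd 1 (pd 1 L) p
              + 2 * (cosh (p$1) / sinh (p$1)) * pd 1 L p + L p)
            + pd 2 (pd 2 L) p + (cos (p$2) / sin (p$2)) * pd 2 L p)" unfolding R_def .
  note facts = r0 sh st Lp d0 d1 d2 d3 s12 s13 s23 H33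
  consider "a = 1" | "a = 2" | "a = 3" using exhaust_3 by blast
  then show "covd (AL L) (PhiL L) a p = - hodgeH3 p (curv (AL L) p) a"
  proof cases
    case 1 then show ?thesis using comp1[OF facts] by simp
  next
    case 2 then show ?thesis using comp2[OF facts] by simp
  next
    case 3 then show ?thesis using comp3[OF facts] by simp
  qed
qed

end
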